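(* Let $\mathcal{A}$ be the automaton whose set of states is $$S=\Big\{\pm\sum_{i=0}^3c_i\alpha^i : c_i\in\{0,1\},\ c_0c_1c_2c_3\neq1111\Big\}\cup\{\pm(\alpha^{-1}+1+\alpha^2),\ \pm(\alpha^{-2}+\alpha^{-1}+\alpha),\ \pm(\alpha^{-3}+\alpha^{-2}+1+\alpha^3)\},$$ whose edges are the triples $(s,(a,b),t)\in S\times\{0,1\}^2\times S$ with $t=\frac{s}{\alpha}+(a-b)\alpha^3$, and whose initial state is $0$. Say that a sequence $(a_n,b_n)_{n\ge l}$ in $\{0,1\}^2$ is an infinite path of $\mathcal{A}$ beginning in the initial state if there are states $(e_n)_{n\ge l}$ in $S$ with $e_l=0$ and $(e_n,(a_n,b_n),e_{n+1})$ an edge for all $n\ge l$. Then for all $(\varepsilon_i)_{i\ge l}$ and $(\varepsilon'_i)_{i\ge l}$ in $\mathcal{D}^\infty$, the following are equivalent: (1) $\sum_{i\ge l}\varepsilon_i\alpha^i=\sum_{i\ge l}\varepsilon'_i\alpha^i$; (2) $(\varepsilon_i,\varepsilon'_i)_{i\ge l}$ is an infinite path in $\mathcal{A}$ beginning in the initial state.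
   Context: Let $P(x)=x^4-x^3-x^2-x-1$. Its roots are $\beta=\beta_1\approx 1.9275$, a real root $\beta_2\approx-0.7748$, and a pair of complex conjugate roots $\beta_3\approx-0.0763+0.8147i$ and $\overline{\beta_3}$. For $i\in\mathbb{Z}$ put $\alpha^i=(\beta_2^i,\beta_3^i)\in\mathbb{R}\times\mathbb{C}$, with $\alpha^0=1=(1,1)$; arithmetic in $\mathbb{R}\times\mathbb{C}$ is componentwise and an integer $n$ is identified with $(n,n)$. Let $\mathcal{D}^\infty$ be the set of sequences $(\varepsilon_i)_{i\ge l}$, $l\in\mathbb{Z}$, with $\varepsilon_i\in\{0,1\}$ and containing no four consecutive $1$'s. *)

theory Defs
  imports "HOL-Analysis.Analysis"
begin

definition beta2 :: real where
  "beta2 = (THE x::real. x^4 - x^3 - x^2 - x - 1 = 0 \<and> x < 0)"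

definition beta3 :: complex where
  "beta3 = (THE z::complex. z^4 - z^3 - z^2 - z - 1 = 0 \<and> Im z > 0)"

text \<open>alpha^i in R x C, componentwise.\<close>
definition apow :: "int \<Rightarrow> real \<times> complex" where
  "apow i = (beta2 powi i, beta3 powi i)"

definition div_alpha :: "real \<times> complex \<Rightarrow> real \<times> complex" where
  "div_alpha s = (fst s / beta2, snd s / beta3)"

definition in_Dinf :: "int \<Rightarrow> (int \<Rightarrow> nat) \<Rightarrow> bool" where
  "in_Dinf l eps \<longleftrightarrow> (\<forall>i\<ge>l. eps i \<in> {0,1}) \<and>
     (\<forall>i\<ge>l. \<not> (eps i = 1 \<and> eps (i+1) = 1 \<and> eps (i+2) = 1 \<and> eps (i+3) = 1))"

definition aval :: "int \<Rightarrow> (int \<Rightarrow> nat) \<Rightarrow> real \<times> complex" where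
  "aval l eps = (\<Sum>n. real (eps (l + int n)) *\<^sub>R apow (l + int n))"

definition states :: "(real \<times> complex) set" where
  "states =
    {s *\<^sub>R (\<Sum>i<4. c i *\<^sub>R apow (int i)) | s c.
        s \<in> {-1, 1} \<and> (\<forall>i<4. c i \<in> {0::real, 1}) \<and> \<not> (\<forall>i<4. c i = 1)}
    \<union> {s *\<^sub>R x | s x. s \<in> {-1, 1::real} \<and>
        x \<in> {apow (-1) + apow 0 + apow 2,
              apow (-2) + apow (-1) + apow 1,
              apow (-3) + apow (-2) + apow 0 + apow 3}}"

definition is_edge :: "real \<times> complex \<Rightarrow> nat \<times> nat \<Rightarrow> real \<times> complex \<Rightarrow> bool" where
  "is_edge s ab t \<longleftrightarrow> s \<in> states \<and> t \<in> states \<and> fst ab \<in> {0,1} \<and> snd ab \<in> {0,1} \<and>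
     t = div_alpha s + (real (fst ab) - real (snd ab)) *\<^sub>R apow 3"

definition is_path_from_init :: "int \<Rightarrow> (int \<Rightarrow> nat) \<Rightarrow> (int \<Rightarrow> nat) \<Rightarrow> bool" where
  "is_path_from_init l a b \<longleftrightarrow>
     (\<exists>e :: int \<Rightarrow> real \<times> complex. e l = 0 \<and> (\<forall>n\<ge>l. e n \<in> states \<and> is_edge (e n) (a n, b n) (e (n+1))))"

end

theory Submission
  imports Defs
begin

definition PP :: "'a::comm_ring_1 \<Rightarrow> 'a" where "PP x = x^4 - x^3 - x^2 - x - 1"

lemma b1_ex: "\<exists>b1::real. 1.927561975482925 \<le> b1 \<and> b1 \<le> 1.927561975482926 \<and> PP b1 = 0"
proof -
  have c: "continuous_on {1.927561975482925..1.927561975482926} (PP::real\<Rightarrow>real)"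
    unfolding PP_def by (intro continuous_intros)
  have "PP (1.927561975482925::real) \<le> 0" "0 \<le> PP (1.927561975482926::real)"
    unfolding PP_def by (simp_all add: eval_nat_numeral)
  from IVT'[OF this _ c] obtain x :: real where "x \<ge> 1.927561975482925" "x \<le> 1.927561975482926" "PP x = 0" by auto
  then show ?thesis by blast
qed

lemma b2_ex: "\<exists>b2::real. -0.774804113215434 \<le> b2 \<and> b2 \<le> -0.774804113215433 \<and> PP b2 = 0"
proof -
  have c: "continuous_on {-0.774804113215434..-0.774804113215433} (PP::real\<Rightarrow>real)"
    unfolding PP_def by (intro continuous_intros)
  have "PP (-0.774804113215433::real) \<le> 0" "0 \<le> PP (-0.774804113215434::real)"
    unfolding PP_def by (simp_all add: eval_nat_numeral)
  from IVT2'[OF this _ c] obtain x :: real where "x \<ge> -0.774804113215434" "x \<le> -0.774804113215433" "PP x = 0" by auto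
  then show ?thesis by blast
qed

lemma PPq: "(x-1)*PP x = x^5 - 2*x^4 + (1::'a::comm_ring_1)"
  unfolding PP_def by (simp add: eval_nat_numeral algebra_simps)

lemma neg_root_lt: assumes "x < y" "y < 0" "PP x = (0::real)" shows "PP y \<noteq> 0"
proof
  assume py: "PP y = 0"
  have qx: "x^5 - 2*x^4 + 1 = 0" using PPq[of x] assms(3) by simp
  have qy: "y^5 - 2*y^4 + 1 = 0" using PPq[of y] py by simp
  have a: "(-y)^5 < (-x)^5" by (rule power_strict_mono) (use assms in auto)
  have b: "(-y)^4 < (-x)^4" by (rule power_strict_mono) (use assms in auto)
  have "(-y)^5 = - (y^5)" "(-x)^5 = -(x^5)" "(-y)^4 = y^4" "(-x)^4 = x^4" by simp_all
  with a b qx qy show False by linarith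
qed

lemma neg_root_unique: assumes "x < 0" "y < 0" "PP x = (0::real)" "PP y = 0" shows "x = y"
  using neg_root_lt[of x y] neg_root_lt[of y x] assms by (cases x y rule: linorder_cases) auto


lemma beta2_props: "PP beta2 = 0" "beta2 < 0" "-0.774804113215434 \<le> beta2" "beta2 \<le> -0.774804113215433"
proof -
  obtain b :: real where b: "-0.774804113215434 \<le> b" "b \<le> -0.774804113215433" "PP b = 0" using b2_ex by blast
  have "beta2 = b" unfolding beta2_def
  proof (rule the_equality)
    show "b ^ 4 - b ^ 3 - b\<^sup>2 - b - 1 = 0 \<and> b < 0" using b by (simp add: PP_def)
    fix x assume "x ^ 4 - x ^ 3 - x\<^sup>2 - x - 1 = 0 \<and> x < (0::real)"
    then show "x = b" using neg_root_unique[of x b] b by (simp add: PP_def)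
  qed
  with b show "PP beta2 = 0" "beta2 < 0" "-0.774804113215434 \<le> beta2" "beta2 \<le> -0.774804113215433" by simp_all
qed

definition bb1 :: real where "bb1 = (SOME b1::real. 1.927561975482925 \<le> b1 \<and> b1 \<le> 1.927561975482926 \<and> PP b1 = 0)"

lemma bb1_props: "1.927561975482925 \<le> bb1" "bb1 \<le> 1.927561975482926" "PP bb1 = 0"
  using someI_ex[OF b1_ex] unfolding bb1_def by auto

definition uu :: real where "uu = bb1 + beta2 - 1"
definition DD :: real where "DD = 3*bb1^2 + 2*bb1*beta2 + 3*beta2^2 - 2*bb1 - 2*beta2 - 5"

lemma fact_id: fixes z b1 b2 :: "'a::comm_ring_1"
  shows "PP z = PP b1 + (z-b1)*((b2^3 + (b1-1)*b2^2 + (b1^2-b1-1)*b2 + (b1^3-b1^2-b1-1))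
           + (z - b2)*(z^2 + (b1+b2-1)*z + (b1^2+b1*b2+b2^2-b1-b2-1)))"
  unfolding PP_def by (simp add: eval_nat_numeral algebra_simps)

lemma fact_id2: fixes b1 b2 :: "'a::comm_ring_1"
  shows "PP b2 = PP b1 + (b2-b1)*(b2^3 + (b1-1)*b2^2 + (b1^2-b1-1)*b2 + (b1^3-b1^2-b1-1))"
  unfolding PP_def by (simp add: eval_nat_numeral algebra_simps)

lemma quad_id: fixes x b1 b2 :: "'a::field_char_0"
  shows "x^2 + (b1+b2-1)*x + (b1^2+b1*b2+b2^2-b1-b2-1) = (x + (b1+b2-1)/2)^2 + (3*b1^2+2*b1*b2+3*b2^2-2*b1-2*b2-5)/4"
  by (simp add: field_simps power2_eq_square)

lemma PP_of_real: "PP (of_real x :: 'a::{real_algebra_1,comm_ring_1}) = of_real (PP x)"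
  by (simp add: PP_def)

lemma PP_factor: fixes z :: complex
  shows "PP z = (z - of_real bb1) * (z - of_real beta2) * ((z + of_real uu / 2)^2 + of_real DD / 4)"
proof -
  let ?b1 = "of_real bb1 :: complex" and ?b2 = "of_real beta2 :: complex"
  have p1: "PP ?b1 = 0" using bb1_props(3) by (simp only: PP_of_real) simp
  have p2: "PP ?b2 = 0" using beta2_props(1) by (simp only: PP_of_real) simp
  have "(0::real) < 1.927561975482925" by simp
  then have "bb1 \<noteq> beta2" using beta2_props(2) bb1_props(1) by linarith
  then have ne: "?b2 - ?b1 \<noteq> 0" by simp
  have q: "?b2^3 + (?b1-1)*?b2^2 + (?b1^2-?b1-1)*?b2 + (?b1^3-?b1^2-?b1-1) = 0"
    using fact_id2[of ?b2 ?b1] p1 p2 ne by simp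
  have "PP z = (z-?b1)*((z - ?b2)*(z^2 + (?b1+?b2-1)*z + (?b1^2+?b1*?b2+?b2^2-?b1-?b2-1)))"
    using fact_id[of z ?b1 ?b2] by (simp only: p1 q add_0_left)
  also have "z^2 + (?b1+?b2-1)*z + (?b1^2+?b1*?b2+?b2^2-?b1-?b2-1) = (z + of_real uu / 2)^2 + of_real DD / 4"
    unfolding quad_id uu_def DD_def by simp
  finally show ?thesis by (simp add: mult.assoc)
qed

lemma imul_lo: fixes X Y :: real
  assumes "a \<le> X" "X \<le> b" "c \<le> Y" "Y \<le> d" "l \<le> a*c" "l \<le> a*d" "l \<le> b*c" "l \<le> b*d"
  shows "l \<le> X*Y"
proof (cases "0 \<le> Y")
  case True
  then have "a*Y \<le> X*Y" using assms(1) by (simp add: mult_right_mono)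
  moreover have "l \<le> a*Y"
  proof (cases "0 \<le> a")
    case True then have "a*c \<le> a*Y" using assms(3) by (simp add: mult_left_mono)
    then show ?thesis using assms(5) by (simp only: ring_distribs add_divide_distrib diff_divide_distrib; linarith)
  next
    case False then have "a*d \<le> a*Y" using assms(4) by (simp add: mult_left_mono_neg)
    then show ?thesis using assms(6) by (simp only: ring_distribs add_divide_distrib diff_divide_distrib; linarith)
  qed
  ultimately show ?thesis by (simp only: ring_distribs add_divide_distrib diff_divide_distrib; linarith)
next
  case False
  then have "b*Y \<le> X*Y" using assms(2) by (simp add: mult_right_mono_neg)
  moreover have "l \<le> b*Y"
  proof (cases "0 \<le> b")
    case True then have "b*c \<le> b*Y" using assms(3) by (simp add: mult_left_mono)
    then show ?thesis using assms(7) by (simp only: ring_distribs add_divide_distrib diff_divide_distrib; linarith)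
  next
    case False then have "b*d \<le> b*Y" using assms(4) by (simp add: mult_left_mono_neg)
    then show ?thesis using assms(8) by (simp only: ring_distribs add_divide_distrib diff_divide_distrib; linarith)
  qed
  ultimately show ?thesis by (simp only: ring_distribs add_divide_distrib diff_divide_distrib; linarith)
qed

lemma imul_hi: fixes X Y :: real
  assumes "a \<le> X" "X \<le> b" "c \<le> Y" "Y \<le> d" "a*c \<le> h" "a*d \<le> h" "b*c \<le> h" "b*d \<le> h"
  shows "X*Y \<le> h"
proof -
  have "-h \<le> X*(-Y)" by (rule imul_lo[of a X b "-d" "-Y" "-c"]) (use assms in auto)
  then show ?thesis by simp
qed

lemma smul_lo: fixes x y S :: real
  assumes "a \<le> S*x" "S*x \<le> b" "c \<le> S*y" "S*y \<le> d" "0 < S"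
    "l*S \<le> a*c" "l*S \<le> a*d" "l*S \<le> b*c" "l*S \<le> b*d"
  shows "l \<le> S*(x*y)"
proof -
  have "l*S \<le> (S*x)*(S*y)" by (rule imul_lo[OF assms(1-4) assms(6-9)])
  then have "S*l \<le> S*(S*(x*y))" by (simp add: algebra_simps)
  then show ?thesis using assms(5) by simp
qed

lemma smul_hi: fixes x y S :: real
  assumes "a \<le> S*x" "S*x \<le> b" "c \<le> S*y" "S*y \<le> d" "0 < S"
    "a*c \<le> h*S" "a*d \<le> h*S" "b*c \<le> h*S" "b*d \<le> h*S"
  shows "S*(x*y) \<le> h"
proof -
  have "(S*x)*(S*y) \<le> h*S" by (rule imul_hi[OF assms(1-4) assms(6-9)])
  then have "S*(S*(x*y)) \<le> S*h" by (simp add: algebra_simps)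
  then show ?thesis using assms(5) by simp
qed

lemma sq_lo: fixes S D r :: real
  assumes "0 \<le> r" "r*r \<le> S*l" "l \<le> S*D" "0 < S"
  shows "r \<le> S * sqrt D"
proof -
  have "S*l \<le> S*(S*D)" using assms by simp
  then have "r^2 \<le> (S*S)*D" using assms(2) by (simp add: power2_eq_square algebra_simps)
  then have "r \<le> sqrt ((S*S)*D)" by (rule real_le_rsqrt)
  also have "sqrt ((S*S)*D) = S * sqrt D" using assms(4) by (simp add: real_sqrt_mult)
  finally show ?thesis .
qed

lemma sq_hi: fixes S D r :: real
  assumes "0 \<le> r" "S*h \<le> r*r" "S*D \<le> h" "0 < S"
  shows "S * sqrt D \<le> r"
proof -
  have "S*(S*D) \<le> S*h" using assms by simp
  then have "(S*S)*D \<le> r*r" using assms(2) by (simp add: algebra_simps)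
  then have "sqrt ((S*S)*D) \<le> sqrt (r*r)" by (rule real_sqrt_le_mono)
  also have "sqrt (r*r) = r" using assms(1) by simp
  also have "sqrt ((S*S)*D) = S * sqrt D" using assms(4) by (simp add: real_sqrt_mult)
  finally show ?thesis .
qed

definition aa :: real where "aa = (1 - bb1 - beta2)/2"
definition bq :: real where "bq = sqrt DD / 2"
definition rz2 :: real where "rz2 = aa*aa - DD/4"
definition iz2 :: real where "iz2 = 2*(aa*bq)"
definition rz3 :: real where "rz3 = aa*rz2 - bq*iz2"
definition iz3 :: real where "iz3 = aa*iz2 + bq*rz2"
definition mod2 :: real where "mod2 = aa*aa + DD/4"

lemma DD_alt: "DD = 3*(bb1*bb1) + 2*(bb1*beta2) + 3*(beta2*beta2) - 2*bb1 - 2*beta2 - 5"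
  unfolding DD_def by (simp add: power2_eq_square)

lemma e_bb1_lo: "1927561975482 \<le> (1000000000000::real) * (bb1)" using bb1_props(1) by simp
lemma e_bb1_hi: "(1000000000000::real) * (bb1) \<le> 1927561975483" using bb1_props(2) by simp
lemma e_beta2_lo: "(-774804113216) \<le> (1000000000000::real) * (beta2)" using beta2_props(3) by simp
lemma e_beta2_hi: "(1000000000000::real) * (beta2) \<le> (-774804113215)" using beta2_props(4) by simp

lemma e_p11_lo: "3715495169324 \<le> (1000000000000::real) * (bb1*bb1)"
  by (rule smul_lo[OF e_bb1_lo e_bb1_hi e_bb1_lo e_bb1_hi]) simp_all

lemma e_p11_hi: "(1000000000000::real) * (bb1*bb1) \<le> 3715495169328"
  by (rule smul_hi[OF e_bb1_lo e_bb1_hi e_bb1_lo e_bb1_hi]) simp_all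

lemma e_p12_lo: "(-1493482947083) \<le> (1000000000000::real) * (bb1*beta2)"
  by (rule smul_lo[OF e_bb1_lo e_bb1_hi e_beta2_lo e_beta2_hi]) simp_all

lemma e_p12_hi: "(1000000000000::real) * (bb1*beta2) \<le> (-1493482947080)"
  by (rule smul_hi[OF e_bb1_lo e_bb1_hi e_beta2_lo e_beta2_hi]) simp_all

lemma e_p22_lo: "600321413854 \<le> (1000000000000::real) * (beta2*beta2)"
  by (rule smul_lo[OF e_beta2_lo e_beta2_hi e_beta2_lo e_beta2_hi]) simp_all

lemma e_p22_hi: "(1000000000000::real) * (beta2*beta2) \<le> 600321413857"
  by (rule smul_hi[OF e_beta2_lo e_beta2_hi e_beta2_lo e_beta2_hi]) simp_all

lemma e_p222_lo: "(-465131500709) \<le> (1000000000000::real) * (beta2*beta2*beta2)"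
  by (rule smul_lo[OF e_p22_lo e_p22_hi e_beta2_lo e_beta2_hi]) simp_all

lemma e_p222_hi: "(1000000000000::real) * (beta2*beta2*beta2) \<le> (-465131500705)"
  by (rule smul_hi[OF e_p22_lo e_p22_hi e_beta2_lo e_beta2_hi]) simp_all

lemma e_DD_lo: "2654968130832 \<le> (1000000000000::real) * (DD)"
  using e_p11_lo e_p11_hi e_p12_lo e_p12_hi e_p22_lo e_p22_hi e_bb1_lo e_bb1_hi e_beta2_lo e_beta2_hi unfolding DD_alt by (simp only: ring_distribs add_divide_distrib diff_divide_distrib; linarith)

lemma e_DD_hi: "(1000000000000::real) * (DD) \<le> 2654968130863"
  using e_p11_lo e_p11_hi e_p12_lo e_p12_hi e_p22_lo e_p22_hi e_bb1_lo e_bb1_hi e_beta2_lo e_beta2_hi unfolding DD_alt by (simp only: ring_distribs add_divide_distrib diff_divide_distrib; linarith)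

lemma e_aa_lo: "(-76378931134) \<le> (1000000000000::real) * (aa)"
  using e_bb1_lo e_bb1_hi e_beta2_lo e_beta2_hi unfolding aa_def by (simp only: ring_distribs add_divide_distrib diff_divide_distrib; linarith)

lemma e_aa_hi: "(1000000000000::real) * (aa) \<le> (-76378931133)"
  using e_bb1_lo e_bb1_hi e_beta2_lo e_beta2_hi unfolding aa_def by (simp only: ring_distribs add_divide_distrib diff_divide_distrib; linarith)

lemma sqDD_lo: "1629407294334 \<le> (1000000000000::real) * sqrt DD"
  by (rule sq_lo[OF _ _ e_DD_lo]) simp_all

lemma sqDD_hi: "(1000000000000::real) * sqrt DD \<le> 1629407294345"
  by (rule sq_hi[OF _ _ e_DD_hi]) simp_all

lemma e_bq_lo: "814703647167 \<le> (1000000000000::real) * (bq)"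
  using sqDD_lo unfolding bq_def by simp

lemma e_bq_hi: "(1000000000000::real) * (bq) \<le> 814703647173"
  using sqDD_hi unfolding bq_def by simp

lemma e_paa_lo: "5833741121 \<le> (1000000000000::real) * (aa*aa)"
  by (rule smul_lo[OF e_aa_lo e_aa_hi e_aa_lo e_aa_hi]) simp_all

lemma e_paa_hi: "(1000000000000::real) * (aa*aa) \<le> 5833741122"
  by (rule smul_hi[OF e_aa_lo e_aa_hi e_aa_lo e_aa_hi]) simp_all

lemma e_rz2_lo: "(-657908291595) \<le> (1000000000000::real) * (rz2)"
  using e_paa_lo e_paa_hi e_DD_lo e_DD_hi unfolding rz2_def by (simp only: ring_distribs add_divide_distrib diff_divide_distrib; linarith)

lemma e_rz2_hi: "(1000000000000::real) * (rz2) \<le> (-657908291586)"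
  using e_paa_lo e_paa_hi e_DD_lo e_DD_hi unfolding rz2_def by (simp only: ring_distribs add_divide_distrib diff_divide_distrib; linarith)

lemma e_pab_lo: "(-62226193763) \<le> (1000000000000::real) * (aa*bq)"
  by (rule smul_lo[OF e_aa_lo e_aa_hi e_bq_lo e_bq_hi]) simp_all

lemma e_pab_hi: "(1000000000000::real) * (aa*bq) \<le> (-62226193760)"
  by (rule smul_hi[OF e_aa_lo e_aa_hi e_bq_lo e_bq_hi]) simp_all

lemma e_iz2_lo: "(-124452387526) \<le> (1000000000000::real) * (iz2)"
  using e_pab_lo e_pab_hi unfolding iz2_def by (simp only: ring_distribs add_divide_distrib diff_divide_distrib; linarith)

lemma e_iz2_hi: "(1000000000000::real) * (iz2) \<le> (-124452387520)"
  using e_pab_lo e_pab_hi unfolding iz2_def by (simp only: ring_distribs add_divide_distrib diff_divide_distrib; linarith)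

lemma e_par2_lo: "50250332094 \<le> (1000000000000::real) * (aa*rz2)"
  by (rule smul_lo[OF e_aa_lo e_aa_hi e_rz2_lo e_rz2_hi]) simp_all

lemma e_par2_hi: "(1000000000000::real) * (aa*rz2) \<le> 50250332097"
  by (rule smul_hi[OF e_aa_lo e_aa_hi e_rz2_lo e_rz2_hi]) simp_all

lemma e_pbi2_lo: "(-101391814017) \<le> (1000000000000::real) * (bq*iz2)"
  by (rule smul_lo[OF e_bq_lo e_bq_hi e_iz2_lo e_iz2_hi]) simp_all

lemma e_pbi2_hi: "(1000000000000::real) * (bq*iz2) \<le> (-101391814011)"
  by (rule smul_hi[OF e_bq_lo e_bq_hi e_iz2_lo e_iz2_hi]) simp_all

lemma e_pai2_lo: "9505540335 \<le> (1000000000000::real) * (aa*iz2)"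
  by (rule smul_lo[OF e_aa_lo e_aa_hi e_iz2_lo e_iz2_hi]) simp_all

lemma e_pai2_hi: "(1000000000000::real) * (aa*iz2) \<le> 9505540337"
  by (rule smul_hi[OF e_aa_lo e_aa_hi e_iz2_lo e_iz2_hi]) simp_all

lemma e_pbr2_lo: "(-536000284668) \<le> (1000000000000::real) * (bq*rz2)"
  by (rule smul_lo[OF e_bq_lo e_bq_hi e_rz2_lo e_rz2_hi]) simp_all

lemma e_pbr2_hi: "(1000000000000::real) * (bq*rz2) \<le> (-536000284656)"
  by (rule smul_hi[OF e_bq_lo e_bq_hi e_rz2_lo e_rz2_hi]) simp_all

lemma e_rz3_lo: "151642146105 \<le> (1000000000000::real) * (rz3)"
  using e_par2_lo e_par2_hi e_pbi2_lo e_pbi2_hi unfolding rz3_def by (simp only: ring_distribs add_divide_distrib diff_divide_distrib; linarith)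

lemma e_rz3_hi: "(1000000000000::real) * (rz3) \<le> 151642146114"
  using e_par2_lo e_par2_hi e_pbi2_lo e_pbi2_hi unfolding rz3_def by (simp only: ring_distribs add_divide_distrib diff_divide_distrib; linarith)

lemma e_iz3_lo: "(-526494744333) \<le> (1000000000000::real) * (iz3)"
  using e_pai2_lo e_pai2_hi e_pbr2_lo e_pbr2_hi unfolding iz3_def by (simp only: ring_distribs add_divide_distrib diff_divide_distrib; linarith)

lemma e_iz3_hi: "(1000000000000::real) * (iz3) \<le> (-526494744319)"
  using e_pai2_lo e_pai2_hi e_pbr2_lo e_pbr2_hi unfolding iz3_def by (simp only: ring_distribs add_divide_distrib diff_divide_distrib; linarith)

lemma e_mod2_lo: "669575773829 \<le> (1000000000000::real) * (mod2)"
  using e_paa_lo e_paa_hi e_DD_lo e_DD_hi unfolding mod2_def by (simp only: ring_distribs add_divide_distrib diff_divide_distrib; linarith)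

lemma e_mod2_hi: "(1000000000000::real) * (mod2) \<le> 669575773838"
  using e_paa_lo e_paa_hi e_DD_lo e_DD_hi unfolding mod2_def by (simp only: ring_distribs add_divide_distrib diff_divide_distrib; linarith)

lemma DD_pos: "0 < DD" using e_DD_lo by simp
lemma bq_pos: "0 < bq" using DD_pos unfolding bq_def by simp
lemma bq_sq: "bq * bq = DD / 4" using DD_pos unfolding bq_def by simp
lemma aa_uu: "aa = - uu / 2" unfolding aa_def uu_def by simp

lemma PP_cplx: "PP (Complex aa bq) = 0"
proof -
  have e1: "Complex aa bq + of_real uu / 2 = \<i> * of_real bq"
    by (simp add: complex_eq_iff aa_uu)
  have e2: "(\<i> * of_real bq)^2 + of_real DD / 4 = (0::complex)"
  proof -
    have "(\<i> * of_real bq)^2 = - ((of_real bq)^2 :: complex)" by (simp add: power_mult_distrib)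
    moreover have "(of_real bq)^2 = (of_real (DD/4) :: complex)"
      unfolding bq_sq[symmetric] by (simp add: power2_eq_square)
    ultimately show ?thesis by simp
  qed
  show "PP (Complex aa bq) = 0" unfolding PP_factor e1 e2 by simp
qed

lemma beta3_eq: "beta3 = Complex aa bq"
  unfolding beta3_def
proof (rule the_equality)
  show "(Complex aa bq) ^ 4 - (Complex aa bq) ^ 3 - (Complex aa bq)\<^sup>2 - (Complex aa bq) - 1 = 0 \<and> 0 < Im (Complex aa bq)"
    using bq_pos PP_cplx by (simp add: PP_def)
next
  fix z :: complex
  assume "z ^ 4 - z ^ 3 - z\<^sup>2 - z - 1 = 0 \<and> 0 < Im z"
  then have pz: "PP z = 0" and iz: "0 < Im z" by (auto simp: PP_def)
  have n1: "z - of_real bb1 \<noteq> 0" using iz by (auto simp: complex_eq_iff)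
  have n2: "z - of_real beta2 \<noteq> 0" using iz by (auto simp: complex_eq_iff)
  have f: "(z + of_real uu / 2)^2 + of_real DD / 4 = 0" using pz n1 n2 unfolding PP_factor by simp
  define y where "y = z + of_real uu / 2"
  have "(y - \<i> * of_real bq) * (y + \<i> * of_real bq) = y^2 + of_real (bq*bq)"
    by (simp add: algebra_simps power2_eq_square)
  also have "\<dots> = 0" using f unfolding y_def bq_sq by simp
  finally have "y - \<i> * of_real bq = 0 \<or> y + \<i> * of_real bq = 0" by simp
  then have "y = \<i> * of_real bq \<or> y = - (\<i> * of_real bq)" by (auto simp: eq_neg_iff_add_eq_0)
  moreover have "Im y = Im z" unfolding y_def by simp
  ultimately have "y = \<i> * of_real bq" using iz bq_pos by auto
  then show "z = Complex aa bq" unfolding y_def by (simp add: complex_eq_iff aa_uu)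
qed

lemma beta3_sq: "beta3^2 = Complex rz2 iz2"
  by (simp add: beta3_eq power2_eq_square rz2_def iz2_def bq_sq complex_eq_iff)

lemma beta3_cube: "beta3^3 = Complex rz3 iz3"
proof -
  have "beta3^3 = beta3^2 * beta3" by (simp add: power2_eq_square power3_eq_cube)
  also have "\<dots> = Complex rz2 iz2 * beta3" unfolding beta3_sq ..
  also have "\<dots> = Complex rz2 iz2 * Complex aa bq" unfolding beta3_eq ..
  also have "\<dots> = Complex rz3 iz3" by (simp add: rz3_def iz3_def complex_eq_iff algebra_simps)
  finally show ?thesis .
qed

lemma cmod_beta3_sq: "(cmod beta3)^2 = mod2"
  unfolding cmod_power2 by (simp add: beta3_eq power2_eq_square mod2_def bq_sq)

lemma cmod_beta3_le: "cmod beta3 \<le> 818276098783 / 1000000000000"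
proof (rule power2_le_imp_le)
  have "(818276098783 / 1000000000000)^2 * 1000000000000 \<ge> (669575773838::real)" by (simp add: eval_nat_numeral)
  then show "(cmod beta3)^2 \<le> (818276098783 / 1000000000000)^2"
    using cmod_beta3_sq e_mod2_hi by simp
qed simp

lemma abs_beta2_le: "\<bar>beta2\<bar> \<le> 774804113216 / 1000000000000"
  using e_beta2_lo beta2_props(2) by simp

lemma quot_mono: fixes t m :: real assumes "0 \<le> t" "t \<le> m" "m < 1"
  shows "t^4/(1-t) \<le> m^4/(1-m)"
  by (rule frac_le) (use assms in \<open>auto intro: power_mono\<close>)

lemma B2_le: "\<bar>beta2\<bar>^4/(1-\<bar>beta2\<bar>) \<le> 1600321413865 / 1000000000000"
proof -
  have "\<bar>beta2\<bar>^4/(1-\<bar>beta2\<bar>) \<le> (774804113216 / 1000000000000)^4/(1-774804113216 / 1000000000000)"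
    by (rule quot_mono) (use abs_beta2_le in simp_all)
  also have "\<dots> \<le> 1600321413865 / 1000000000000" by (simp add: eval_nat_numeral)
  finally show ?thesis .
qed

lemma B3_le: "cmod beta3^4/(1-cmod beta3) \<le> 2467103743153 / 1000000000000"
proof -
  have "cmod beta3^4/(1-cmod beta3) \<le> (818276098783 / 1000000000000)^4/(1-818276098783 / 1000000000000)"
    by (rule quot_mono) (use cmod_beta3_le in simp_all)
  also have "\<dots> \<le> 2467103743153 / 1000000000000" by (simp add: eval_nat_numeral)
  finally show ?thesis .
qed

lemma beta2_abs_lt1: "\<bar>beta2\<bar> < 1" using abs_beta2_le by simp
lemma beta3_abs_lt1: "cmod beta3 < 1" using cmod_beta3_le by simp
lemma PP_beta3: "PP beta3 = 0" using PP_cplx beta3_eq by simp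
lemma beta2_nz: "beta2 \<noteq> 0" using beta2_props(2) by simp
lemma beta3_nz: "beta3 \<noteq> 0" using bq_pos by (simp add: beta3_eq complex_eq_iff)

type_synonym quad = "int \<times> int \<times> int \<times> int"

definition lom :: "int \<Rightarrow> int \<Rightarrow> int \<Rightarrow> int" where "lom c l h = (if 0 \<le> c then c*l else c*h)"
definition him :: "int \<Rightarrow> int \<Rightarrow> int \<Rightarrow> int" where "him c l h = (if 0 \<le> c then c*h else c*l)"
definition sqlo :: "int \<Rightarrow> int \<Rightarrow> int" where "sqlo l h = (if 0 < l then l*l else if h < 0 then h*h else 0)"

fun Tq :: "quad \<Rightarrow> int \<Rightarrow> quad" where "Tq (c0,c1,c2,c3) d = (c1-c0, c2-c0, c3-c0, c0+d)"

fun lo2 :: "quad \<Rightarrow> int" where "lo2 (c0,c1,c2,c3) = c0*1000000000000 + lom c1 (-774804113216) (-774804113215) + lom c2 600321413854 600321413857 + lom c3 (-465131500709) (-465131500705)"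
fun hi2 :: "quad \<Rightarrow> int" where "hi2 (c0,c1,c2,c3) = c0*1000000000000 + him c1 (-774804113216) (-774804113215) + him c2 600321413854 600321413857 + him c3 (-465131500709) (-465131500705)"
fun loR :: "quad \<Rightarrow> int" where "loR (c0,c1,c2,c3) = c0*1000000000000 + lom c1 (-76378931134) (-76378931133) + lom c2 (-657908291595) (-657908291586) + lom c3 151642146105 151642146114"
fun hiR :: "quad \<Rightarrow> int" where "hiR (c0,c1,c2,c3) = c0*1000000000000 + him c1 (-76378931134) (-76378931133) + him c2 (-657908291595) (-657908291586) + him c3 151642146105 151642146114"
fun loI :: "quad \<Rightarrow> int" where "loI (c0,c1,c2,c3) = lom c1 814703647167 814703647173 + lom c2 (-124452387526) (-124452387520) + lom c3 (-526494744333) (-526494744319)"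
fun hiI :: "quad \<Rightarrow> int" where "hiI (c0,c1,c2,c3) = him c1 814703647167 814703647173 + him c2 (-124452387526) (-124452387520) + him c3 (-526494744333) (-526494744319)"

definition inR :: "quad \<Rightarrow> bool" where
  "inR c = (\<not> (lo2 c > 1600321413865 \<or> hi2 c < - 1600321413865) \<and> \<not> (sqlo (loR c) (hiR c) + sqlo (loI c) (hiI c) > 2467103743153 * 2467103743153))"

fun good :: "nat \<Rightarrow> quad \<Rightarrow> bool" where
  "good 0 c = inR c"
| "good (Suc n) c = (inR c \<and> (good n (Tq c (-1)) \<or> good n (Tq c 0) \<or> good n (Tq c 1)))"

definition Slist :: "quad list" where "Slist = [((-1), (-2), (-1), 0), ((-1), (-1), (-1), 0), ((-1), (-1), 0, (-1)), ((-1), (-1), 0, 0), ((-1), 0, (-1), (-1)), ((-1), 0, (-1), 0), ((-1), 0, 0, (-1)), ((-1), 0, 0, 0), ((-1), 0, 1, 0), (0, (-1), (-1), (-1)), (0, (-1), (-1), 0), (0, (-1), 0, (-1)), (0, (-1), 0, 0), (0, (-1), 0, 1), (0, 0, (-1), (-1)), (0, 0, (-1), 0), (0, 0, 0, (-1)), (0, 0, 0, 0), (0, 0, 0, 1), (0, 0, 1, 0), (0, 0, 1, 1), (0, 1, 0, (-1)), (0, 1, 0, 0), (0, 1, 0, 1), (0, 1, 1, 0), (0, 1, 1, 1), (1, 0, (-1), 0), (1, 0, 0, 0), (1, 0, 0, 1), (1, 0, 1, 0), (1, 0, 1, 1), (1, 1, 0, 0), (1, 1, 0, 1), (1, 1,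 1, 0), (1, 2, 1, 0)]"

definition check :: bool where
  "check = list_all (\<lambda>s. list_all (\<lambda>d. Tq s d \<in> set Slist \<or> Tq s d = (1,1,1,1) \<or> Tq s d = (-1,-1,-1,-1) \<or> \<not> good 8 (Tq s d)) [-1,0,1]) Slist"

lemma check_ok: check by code_simp

definition check2 :: bool where
  "check2 = list_all (\<lambda>s. list_all (\<lambda>d.
      (Tq s d = (1,1,1,1) \<longrightarrow> s = (0,1,1,1) \<and> d = 1) \<and>
      (Tq s d = (0,1,1,1) \<longrightarrow> s = (0,0,1,1) \<and> d = 1) \<and>
      (Tq s d = (0,0,1,1) \<longrightarrow> s = (0,0,0,1) \<and> d = 1) \<and>
      (Tq s d = (0,0,0,1) \<longrightarrow> s = (0,0,0,0) \<and> d = 1) \<and>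
      (Tq s d = (-1,-1,-1,-1) \<longrightarrow> s = (0,-1,-1,-1) \<and> d = -1) \<and>
      (Tq s d = (0,-1,-1,-1) \<longrightarrow> s = (0,0,-1,-1) \<and> d = -1) \<and>
      (Tq s d = (0,0,-1,-1) \<longrightarrow> s = (0,0,0,-1) \<and> d = -1) \<and>
      (Tq s d = (0,0,0,-1) \<longrightarrow> s = (0,0,0,0) \<and> d = -1)) [-1,0,1]) Slist"

lemma check2_ok: check2 by code_simp

definition evq :: "quad \<Rightarrow> 'a::comm_ring_1 \<Rightarrow> 'a" where
  "evq c x = (case c of (c0,c1,c2,c3) \<Rightarrow> of_int c0 + of_int c1 * x + of_int c2 * x^2 + of_int c3 * x^3)"

definition emb :: "quad \<Rightarrow> real \<times> complex" where "emb c = (evq c beta2, evq c beta3)"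

lemma inv_root: fixes x :: "'a::field" assumes "x \<noteq> 0" "PP x = 0" shows "inverse x = x^3 - x^2 - x - 1"
proof -
  have "x * (x^3 - x^2 - x - 1) - 1 = PP x" unfolding PP_def by (simp add: algebra_simps eval_nat_numeral)
  then have "x * (x^3 - x^2 - x - 1) = 1" using assms(2) by simp
  then show ?thesis by (rule inverse_unique)
qed

lemma evq_T: fixes x :: "'a::field" assumes "x \<noteq> 0" "PP x = 0"
  shows "evq (Tq c d) x = evq c x / x + of_int d * x^3"
proof -
  obtain c0 c1 c2 c3 where c: "c = (c0,c1,c2,c3)" by (cases c) auto
  have "evq c x / x = of_int c0 * inverse x + of_int c1 + of_int c2 * x + of_int c3 * x^2"
    using assms(1) unfolding c evq_def by (simp add: field_simps eval_nat_numeral)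
  also have "\<dots> = of_int c0 * (x^3 - x^2 - x - 1) + of_int c1 + of_int c2 * x + of_int c3 * x^2"
    using inv_root[OF assms] by simp
  finally show ?thesis unfolding c evq_def by (simp add: algebra_simps)
qed

lemma emb_T: "emb (Tq c d) = div_alpha (emb c) + real_of_int d *\<^sub>R apow 3"
  unfolding emb_def div_alpha_def apow_def
  using evq_T[OF beta2_nz beta2_props(1), of c d] evq_T[OF beta3_nz PP_beta3, of c d]
  by (simp add: scaleR_conv_of_real)

lemma emb_0: "emb (0,0,0,0) = 0"
  unfolding emb_def evq_def by (simp add: zero_prod_def)

lemma sum4: "(\<Sum>i<(4::nat). f i) = f 0 + f 1 + f 2 + (f 3 :: 'a::comm_monoid_add)"
  by (simp add: eval_nat_numeral)

lemma lt4: "(i::nat) < 4 \<longleftrightarrow> i = 0 \<or> i = 1 \<or> i = 2 \<or> i = 3" by auto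

lemma st_gen: fixes c0 c1 c2 c3 s :: int
  assumes "c0 \<in> {0,1}" "c1 \<in> {0,1}" "c2 \<in> {0,1}" "c3 \<in> {0,1}" "\<not> (c0 = 1 \<and> c1 = 1 \<and> c2 = 1 \<and> c3 = 1)" "s \<in> {-1,1}"
  shows "emb (s*c0, s*c1, s*c2, s*c3) \<in> states"
proof -
  define cf where "cf i = real_of_int (if i = 0 then c0 else if i = 1 then c1 else if i = 2 then c2 else c3)" for i :: nat
  have "emb (s*c0, s*c1, s*c2, s*c3) = real_of_int s *\<^sub>R (\<Sum>i<4. cf i *\<^sub>R apow (int i))"
    unfolding emb_def evq_def apow_def cf_def sum4
    by (simp add: scaleR_conv_of_real algebra_simps)
  moreover have "real_of_int s \<in> {-1,1}" using assms(6) by auto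
  moreover have "\<forall>i<4. cf i \<in> {0,1}" using assms(1-4) unfolding lt4 cf_def by auto
  moreover have "\<not> (\<forall>i<4. cf i = 1)" using assms(5) unfolding lt4 cf_def by auto
  ultimately show ?thesis unfolding states_def by blast
qed

lemma st_pos: fixes c0 c1 c2 c3 :: int
  assumes "c0 \<in> {0,1}" "c1 \<in> {0,1}" "c2 \<in> {0,1}" "c3 \<in> {0,1}" "\<not> (c0 = 1 \<and> c1 = 1 \<and> c2 = 1 \<and> c3 = 1)"
  shows "emb (c0, c1, c2, c3) \<in> states"
  using st_gen[OF assms, of 1] by simp

lemma st_neg: fixes c0 c1 c2 c3 :: int
  assumes "c0 \<in> {0,1}" "c1 \<in> {0,1}" "c2 \<in> {0,1}" "c3 \<in> {0,1}" "\<not> (c0 = 1 \<and> c1 = 1 \<and> c2 = 1 \<and> c3 = 1)"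
  shows "emb (-c0, -c1, -c2, -c3) \<in> states"
  using st_gen[OF assms, of "-1"] by simp

lemma inv_t: fixes x :: "'a::field" assumes "x \<noteq> 0" "PP x = 0"
  shows "x powi (-1) = x^3 - x^2 - x - 1" "x powi (-2) = (x^3 - x^2 - x - 1)^2" "x powi (-3) = (x^3 - x^2 - x - 1)^3"
  using inv_root[OF assms] by (simp_all add: power_int_def)

lemma X1_id: fixes x :: "'a::field" assumes "x \<noteq> 0" "PP x = 0"
  shows "x powi (-1) + x powi 0 + x powi 2 = evq (0,-1,0,1) x"
  unfolding inv_t[OF assms] evq_def by (simp add: algebra_simps)

lemma X2_id: fixes x :: "'a::field" assumes "x \<noteq> 0" "PP x = 0"
  shows "x powi (-2) + x powi (-1) + x powi 1 = evq (-1,0,1,0) x"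
proof -
  have "(x^3 - x^2 - x - 1)^2 + (x^3 - x^2 - x - 1) + x - (-1 + x^2) = (-1 - x + x^2) * PP x"
    unfolding PP_def by (simp add: algebra_simps eval_nat_numeral)
  then show ?thesis unfolding inv_t[OF assms] evq_def using assms(2) by (simp add: algebra_simps)
qed

lemma X3_id: fixes x :: "'a::field" assumes "x \<noteq> 0" "PP x = 0"
  shows "x powi (-3) + x powi (-2) + x powi 0 + x powi 3 = evq (1,2,1,0) x"
proof -
  have "(x^3 - x^2 - x - 1)^3 + (x^3 - x^2 - x - 1)^2 + 1 + x^3 - (1 + 2*x + x^2) = (3*x + x^2 - x^3 - 2*x^4 + x^5) * PP x"
    unfolding PP_def by (simp add: algebra_simps eval_nat_numeral)
  then show ?thesis unfolding inv_t[OF assms] evq_def using assms(2) by (simp add: algebra_simps)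
qed

lemma st_sp: assumes "x \<in> {apow (-1) + apow 0 + apow 2, apow (-2) + apow (-1) + apow 1, apow (-3) + apow (-2) + apow 0 + apow 3}"
  "s \<in> {-1, 1::real}" shows "s *\<^sub>R x \<in> states"
  using assms unfolding states_def by blast

lemma emb_X1: "emb (0,-1,0,1) = apow (-1) + apow 0 + apow 2"
  unfolding emb_def apow_def using X1_id[OF beta2_nz beta2_props(1)] X1_id[OF beta3_nz PP_beta3] by simp
lemma emb_X2: "emb (-1,0,1,0) = apow (-2) + apow (-1) + apow 1"
  unfolding emb_def apow_def using X2_id[OF beta2_nz beta2_props(1)] X2_id[OF beta3_nz PP_beta3] by simp
lemma emb_X3: "emb (1,2,1,0) = apow (-3) + apow (-2) + apow 0 + apow 3"
  unfolding emb_def apow_def using X3_id[OF beta2_nz beta2_props(1)] X3_id[OF beta3_nz PP_beta3] by simp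

lemma emb_neg: "emb (-c0,-c1,-c2,-c3) = (-1::real) *\<^sub>R emb (c0,c1,c2,c3)"
  unfolding emb_def evq_def by (simp add: algebra_simps)

lemma st_X1: "emb (0,-1,0,1) \<in> states" using st_sp[of _ 1] emb_X1 by simp
lemma st_X2: "emb (-1,0,1,0) \<in> states" using st_sp[of _ 1] emb_X2 by simp
lemma st_X3: "emb (1,2,1,0) \<in> states" using st_sp[of _ 1] emb_X3 by simp

lemma st_X1n: "emb (0,1,0,-1) \<in> states"
proof -
  have "emb (0,1,0,-1) = (-1::real) *\<^sub>R (apow (-1) + apow 0 + apow 2)" using emb_neg[of 0 "-1" 0 1] emb_X1 by simp
  then show ?thesis by (simp only:) (rule st_sp, auto)
qed

lemma st_X2n: "emb (1,0,-1,0) \<in> states"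
proof -
  have "emb (1,0,-1,0) = (-1::real) *\<^sub>R (apow (-2) + apow (-1) + apow 1)" using emb_neg[of "-1" 0 1 0] emb_X2 by simp
  then show ?thesis by (simp only:) (rule st_sp, auto)
qed

lemma st_X3n: "emb (-1,-2,-1,0) \<in> states"
proof -
  have "emb (-1,-2,-1,0) = (-1::real) *\<^sub>R (apow (-3) + apow (-2) + apow 0 + apow 3)" using emb_neg[of 1 2 1 0] emb_X3 by simp
  then show ?thesis by (simp only:) (rule st_sp, auto)
qed

lemma Slist_states: assumes "c \<in> set Slist" shows "emb c \<in> states"
proof -
  have "c = ((-1), (-2), (-1), 0) \<or> c = ((-1), (-1), (-1), 0) \<or> c = ((-1), (-1), 0, (-1)) \<or> c = ((-1), (-1), 0, 0) \<or> c = ((-1), 0, (-1), (-1)) \<or> c = ((-1), 0, (-1), 0) \<or> c = ((-1), 0, 0, (-1)) \<or> c = ((-1), 0, 0, 0) \<or> c = ((-1), 0, 1, 0) \<or> c = (0, (-1), (-1), (-1)) \<or> c = (0, (-1), (-1), 0) \<or> c = (0, (-1), 0, (-1)) \<or> c = (0, (-1), 0, 0) \<or> c = (0, (-1), 0, 1) \<or> c = (0, 0, (-1), (-1)) \<or> c = (0, 0, (-1), 0) \<or> c = (0, 0, 0, (-1)) \<or> c = (0, 0, 0, 0) \<or> c = (0, 0, 0, 1) \<or> c = (0, 0, 1, 0) \<or> c = (0, 0, 1, 1) \<or> c = (0, 1, 0, (-1)) \<or> c = (0, 1, 0, 0) \<or> c = (0, 1, 0, 1) \<or> c = (0, 1,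 1, 0) \<or> c = (0, 1, 1, 1) \<or> c = (1, 0, (-1), 0) \<or> c = (1, 0, 0, 0) \<or> c = (1, 0, 0, 1) \<or> c = (1, 0, 1, 0) \<or> c = (1, 0, 1, 1) \<or> c = (1, 1, 0, 0) \<or> c = (1, 1, 0, 1) \<or> c = (1, 1, 1, 0) \<or> c = (1, 2, 1, 0)" using assms unfolding Slist_def by simp
  then show ?thesis
  proof (elim disjE)
    assume "c = ((-1), (-2), (-1), 0)" then show ?thesis using st_X3n by simp
  next
    assume "c = ((-1), (-1), (-1), 0)" then show ?thesis using st_neg[of 1 1 1 0] by simp
  next
    assume "c = ((-1), (-1), 0, (-1))" then show ?thesis using st_neg[of 1 1 0 1] by simp
  next
    assume "c = ((-1), (-1), 0, 0)" then show ?thesis using st_neg[of 1 1 0 0] by simp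
  next
    assume "c = ((-1), 0, (-1), (-1))" then show ?thesis using st_neg[of 1 0 1 1] by simp
  next
    assume "c = ((-1), 0, (-1), 0)" then show ?thesis using st_neg[of 1 0 1 0] by simp
  next
    assume "c = ((-1), 0, 0, (-1))" then show ?thesis using st_neg[of 1 0 0 1] by simp
  next
    assume "c = ((-1), 0, 0, 0)" then show ?thesis using st_neg[of 1 0 0 0] by simp
  next
    assume "c = ((-1), 0, 1, 0)" then show ?thesis using st_X2 by simp
  next
    assume "c = (0, (-1), (-1), (-1))" then show ?thesis using st_neg[of 0 1 1 1] by simp
  next
    assume "c = (0, (-1), (-1), 0)" then show ?thesis using st_neg[of 0 1 1 0] by simp
  next
    assume "c = (0, (-1), 0, (-1))" then show ?thesis using st_neg[of 0 1 0 1] by simp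
  next
    assume "c = (0, (-1), 0, 0)" then show ?thesis using st_neg[of 0 1 0 0] by simp
  next
    assume "c = (0, (-1), 0, 1)" then show ?thesis using st_X1 by simp
  next
    assume "c = (0, 0, (-1), (-1))" then show ?thesis using st_neg[of 0 0 1 1] by simp
  next
    assume "c = (0, 0, (-1), 0)" then show ?thesis using st_neg[of 0 0 1 0] by simp
  next
    assume "c = (0, 0, 0, (-1))" then show ?thesis using st_neg[of 0 0 0 1] by simp
  next
    assume "c = (0, 0, 0, 0)" then show ?thesis using st_pos[of 0 0 0 0] by simp
  next
    assume "c = (0, 0, 0, 1)" then show ?thesis using st_pos[of 0 0 0 1] by simp
  next
    assume "c = (0, 0, 1, 0)" then show ?thesis using st_pos[of 0 0 1 0] by simp
  next
    assume "c = (0, 0, 1, 1)" then show ?thesis using st_pos[of 0 0 1 1] by simp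
  next
    assume "c = (0, 1, 0, (-1))" then show ?thesis using st_X1n by simp
  next
    assume "c = (0, 1, 0, 0)" then show ?thesis using st_pos[of 0 1 0 0] by simp
  next
    assume "c = (0, 1, 0, 1)" then show ?thesis using st_pos[of 0 1 0 1] by simp
  next
    assume "c = (0, 1, 1, 0)" then show ?thesis using st_pos[of 0 1 1 0] by simp
  next
    assume "c = (0, 1, 1, 1)" then show ?thesis using st_pos[of 0 1 1 1] by simp
  next
    assume "c = (1, 0, (-1), 0)" then show ?thesis using st_X2n by simp
  next
    assume "c = (1, 0, 0, 0)" then show ?thesis using st_pos[of 1 0 0 0] by simp
  next
    assume "c = (1, 0, 0, 1)" then show ?thesis using st_pos[of 1 0 0 1] by simp
  next
    assume "c = (1, 0, 1, 0)" then show ?thesis using st_pos[of 1 0 1 0] by simp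
  next
    assume "c = (1, 0, 1, 1)" then show ?thesis using st_pos[of 1 0 1 1] by simp
  next
    assume "c = (1, 1, 0, 0)" then show ?thesis using st_pos[of 1 1 0 0] by simp
  next
    assume "c = (1, 1, 0, 1)" then show ?thesis using st_pos[of 1 1 0 1] by simp
  next
    assume "c = (1, 1, 1, 0)" then show ?thesis using st_pos[of 1 1 1 0] by simp
  next
    assume "c = (1, 2, 1, 0)" then show ?thesis using st_X3 by simp
  qed
qed

lemma lom_le: fixes S x :: real assumes "real_of_int l \<le> S*x" "S*x \<le> real_of_int h"
  shows "real_of_int (lom c l h) \<le> real_of_int c * (S*x)"
proof (cases "0 \<le> c")
  case True then show ?thesis using assms(1) by (simp add: lom_def mult_left_mono)
next
  case False then show ?thesis using assms(2) by (simp add: lom_def mult_left_mono_neg)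
qed

lemma him_ge: fixes S x :: real assumes "real_of_int l \<le> S*x" "S*x \<le> real_of_int h"
  shows "real_of_int c * (S*x) \<le> real_of_int (him c l h)"
proof (cases "0 \<le> c")
  case True then show ?thesis using assms(2) by (simp add: him_def mult_left_mono)
next
  case False then show ?thesis using assms(1) by (simp add: him_def mult_left_mono_neg)
qed

lemma sqlo_le: fixes X :: real assumes "real_of_int l \<le> X" "X \<le> real_of_int h"
  shows "real_of_int (sqlo l h) \<le> X^2"
proof -
  consider "0 < l" | "\<not> 0 < l" "h < 0" | "\<not> 0 < l" "\<not> h < 0" by blast
  then show ?thesis
  proof cases
    case 1
    then have "real_of_int l * real_of_int l \<le> X * X" using assms(1) by (intro mult_mono) auto
    then show ?thesis using 1 by (simp add: sqlo_def power2_eq_square)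
  next
    case 2
    then have "(- real_of_int h) * (- real_of_int h) \<le> (-X) * (-X)" using assms(2)
      by (intro mult_mono) auto
    then have "real_of_int h * real_of_int h \<le> X * X" by simp
    then show ?thesis using 2 by (simp add: sqlo_def power2_eq_square)
  next
    case 3 then show ?thesis by (simp add: sqlo_def)
  qed
qed

lemma ev3_eq: "evq (c0,c1,c2,c3) beta3 = Complex (real_of_int c0 + real_of_int c1*aa + real_of_int c2*rz2 + real_of_int c3*rz3) (real_of_int c1*bq + real_of_int c2*iz2 + real_of_int c3*iz3)"
  unfolding evq_def prod.case beta3_sq beta3_cube unfolding beta3_eq by (simp add: complex_eq_iff)

lemma inR_sound: fixes c0 c1 c2 c3 :: int
  assumes h2: "\<bar>evq (c0,c1,c2,c3) beta2\<bar> \<le> \<bar>beta2\<bar>^4/(1-\<bar>beta2\<bar>)"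
    and h3: "cmod (evq (c0,c1,c2,c3) beta3) \<le> cmod beta3^4/(1-cmod beta3)"
  shows "inR (c0,c1,c2,c3)"
proof -
  let ?v = "evq (c0,c1,c2,c3) beta2"
  have ev2: "(1000000000000::real) * ?v = real_of_int c0 * (1000000000000::real) + real_of_int c1 * ((1000000000000::real)*(beta2)) + real_of_int c2 * ((1000000000000::real)*(beta2*beta2)) + real_of_int c3 * ((1000000000000::real)*(beta2*beta2*beta2))"
    unfolding evq_def by (simp add: algebra_simps power2_eq_square power3_eq_cube)
  have lo_beta2_1: "real_of_int (lom c1 (-774804113216) (-774804113215)) \<le> real_of_int c1 * (1000000000000 * (beta2))"
    by (rule lom_le) (use e_beta2_lo e_beta2_hi in simp_all)
  have hi_beta2_1: "real_of_int c1 * (1000000000000 * (beta2)) \<le> real_of_int (him c1 (-774804113216) (-774804113215))"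
    by (rule him_ge) (use e_beta2_lo e_beta2_hi in simp_all)
  have lo_p22_2: "real_of_int (lom c2 600321413854 600321413857) \<le> real_of_int c2 * (1000000000000 * (beta2*beta2))"
    by (rule lom_le) (use e_p22_lo e_p22_hi in simp_all)
  have hi_p22_2: "real_of_int c2 * (1000000000000 * (beta2*beta2)) \<le> real_of_int (him c2 600321413854 600321413857)"
    by (rule him_ge) (use e_p22_lo e_p22_hi in simp_all)
  have lo_p222_3: "real_of_int (lom c3 (-465131500709) (-465131500705)) \<le> real_of_int c3 * (1000000000000 * (beta2*beta2*beta2))"
    by (rule lom_le) (use e_p222_lo e_p222_hi in simp_all)
  have hi_p222_3: "real_of_int c3 * (1000000000000 * (beta2*beta2*beta2)) \<le> real_of_int (him c3 (-465131500709) (-465131500705))"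
    by (rule him_ge) (use e_p222_lo e_p222_hi in simp_all)

  have l2: "real_of_int (lo2 (c0,c1,c2,c3)) \<le> (1000000000000::real) * ?v" using ev2 lo_beta2_1 lo_p22_2 lo_p222_3 by simp
  have u2: "(1000000000000::real) * ?v \<le> real_of_int (hi2 (c0,c1,c2,c3))" using ev2 hi_beta2_1 hi_p22_2 hi_p222_3 by simp
  have "\<bar>?v\<bar> \<le> 1600321413865 / (1000000000000::real)" using h2 B2_le by linarith
  then have "(1000000000000::real) * ?v \<le> 1600321413865" "- 1600321413865 \<le> (1000000000000::real) * ?v" by (simp_all add: abs_le_iff)
  with l2 u2 have c2: "\<not> (lo2 (c0,c1,c2,c3) > 1600321413865 \<or> hi2 (c0,c1,c2,c3) < - 1600321413865)" by linarith
  let ?R = "real_of_int c0 + real_of_int c1*aa + real_of_int c2*rz2 + real_of_int c3*rz3"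
  let ?I = "real_of_int c1*bq + real_of_int c2*iz2 + real_of_int c3*iz3"
  have evR: "(1000000000000::real) * ?R = real_of_int c0 * (1000000000000::real) + real_of_int c1 * ((1000000000000::real)*(aa)) + real_of_int c2 * ((1000000000000::real)*(rz2)) + real_of_int c3 * ((1000000000000::real)*(rz3))"
    by (simp add: algebra_simps)
  have evI: "(1000000000000::real) * ?I = real_of_int c1 * ((1000000000000::real)*(bq)) + real_of_int c2 * ((1000000000000::real)*(iz2)) + real_of_int c3 * ((1000000000000::real)*(iz3))"
    by (simp add: algebra_simps)
  have lo_aa_1: "real_of_int (lom c1 (-76378931134) (-76378931133)) \<le> real_of_int c1 * (1000000000000 * (aa))"
    by (rule lom_le) (use e_aa_lo e_aa_hi in simp_all)
  have hi_aa_1: "real_of_int c1 * (1000000000000 * (aa)) \<le> real_of_int (him c1 (-76378931134) (-76378931133))"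
    by (rule him_ge) (use e_aa_lo e_aa_hi in simp_all)
  have lo_rz2_2: "real_of_int (lom c2 (-657908291595) (-657908291586)) \<le> real_of_int c2 * (1000000000000 * (rz2))"
    by (rule lom_le) (use e_rz2_lo e_rz2_hi in simp_all)
  have hi_rz2_2: "real_of_int c2 * (1000000000000 * (rz2)) \<le> real_of_int (him c2 (-657908291595) (-657908291586))"
    by (rule him_ge) (use e_rz2_lo e_rz2_hi in simp_all)
  have lo_rz3_3: "real_of_int (lom c3 151642146105 151642146114) \<le> real_of_int c3 * (1000000000000 * (rz3))"
    by (rule lom_le) (use e_rz3_lo e_rz3_hi in simp_all)
  have hi_rz3_3: "real_of_int c3 * (1000000000000 * (rz3)) \<le> real_of_int (him c3 151642146105 151642146114)"
    by (rule him_ge) (use e_rz3_lo e_rz3_hi in simp_all)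
  have lo_bq_1: "real_of_int (lom c1 814703647167 814703647173) \<le> real_of_int c1 * (1000000000000 * (bq))"
    by (rule lom_le) (use e_bq_lo e_bq_hi in simp_all)
  have hi_bq_1: "real_of_int c1 * (1000000000000 * (bq)) \<le> real_of_int (him c1 814703647167 814703647173)"
    by (rule him_ge) (use e_bq_lo e_bq_hi in simp_all)
  have lo_iz2_2: "real_of_int (lom c2 (-124452387526) (-124452387520)) \<le> real_of_int c2 * (1000000000000 * (iz2))"
    by (rule lom_le) (use e_iz2_lo e_iz2_hi in simp_all)
  have hi_iz2_2: "real_of_int c2 * (1000000000000 * (iz2)) \<le> real_of_int (him c2 (-124452387526) (-124452387520))"
    by (rule him_ge) (use e_iz2_lo e_iz2_hi in simp_all)
  have lo_iz3_3: "real_of_int (lom c3 (-526494744333) (-526494744319)) \<le> real_of_int c3 * (1000000000000 * (iz3))"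
    by (rule lom_le) (use e_iz3_lo e_iz3_hi in simp_all)
  have hi_iz3_3: "real_of_int c3 * (1000000000000 * (iz3)) \<le> real_of_int (him c3 (-526494744333) (-526494744319))"
    by (rule him_ge) (use e_iz3_lo e_iz3_hi in simp_all)

  have lR: "real_of_int (loR (c0,c1,c2,c3)) \<le> (1000000000000::real) * ?R" using evR lo_aa_1 lo_rz2_2 lo_rz3_3 by simp
  have uR: "(1000000000000::real) * ?R \<le> real_of_int (hiR (c0,c1,c2,c3))" using evR hi_aa_1 hi_rz2_2 hi_rz3_3 by simp
  have lI: "real_of_int (loI (c0,c1,c2,c3)) \<le> (1000000000000::real) * ?I" using evI lo_bq_1 lo_iz2_2 lo_iz3_3 by simp
  have uI: "(1000000000000::real) * ?I \<le> real_of_int (hiI (c0,c1,c2,c3))" using evI hi_bq_1 hi_iz2_2 hi_iz3_3 by simp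
  have sR: "real_of_int (sqlo (loR (c0,c1,c2,c3)) (hiR (c0,c1,c2,c3))) \<le> ((1000000000000::real) * ?R)^2" by (rule sqlo_le[OF lR uR])
  have sI: "real_of_int (sqlo (loI (c0,c1,c2,c3)) (hiI (c0,c1,c2,c3))) \<le> ((1000000000000::real) * ?I)^2" by (rule sqlo_le[OF lI uI])
  have cm: "(cmod (evq (c0,c1,c2,c3) beta3))^2 = ?R^2 + ?I^2" unfolding ev3_eq cmod_power2 by simp
  have "cmod (evq (c0,c1,c2,c3) beta3) \<le> 2467103743153 / (1000000000000::real)" using h3 B3_le by linarith
  then have "(1000000000000::real) * cmod (evq (c0,c1,c2,c3) beta3) \<le> 2467103743153" by simp
  then have "((1000000000000::real) * cmod (evq (c0,c1,c2,c3) beta3))^2 \<le> 2467103743153^2" by (rule power_mono) simp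
  moreover have "((1000000000000::real) * ?R)^2 + ((1000000000000::real) * ?I)^2 = ((1000000000000::real) * cmod (evq (c0,c1,c2,c3) beta3))^2"
    unfolding power_mult_distrib cm by (simp only: distrib_left)
  ultimately have "((1000000000000::real) * ?R)^2 + ((1000000000000::real) * ?I)^2 \<le> 2467103743153^2" by simp
  then have "real_of_int (sqlo (loR (c0,c1,c2,c3)) (hiR (c0,c1,c2,c3)) + sqlo (loI (c0,c1,c2,c3)) (hiI (c0,c1,c2,c3))) \<le> real_of_int (2467103743153 * 2467103743153)"
    using sR sI by (simp add: power2_eq_square)
  then have c3: "\<not> (sqlo (loR (c0,c1,c2,c3)) (hiR (c0,c1,c2,c3)) + sqlo (loI (c0,c1,c2,c3)) (hiI (c0,c1,c2,c3)) > 2467103743153 * 2467103743153)"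
    by (simp only: of_int_le_iff not_less)
  show ?thesis unfolding inR_def using c2 c3 by blast
qed

lemma K1: fixes x :: "'a::field"
  assumes "x \<noteq> 0" "E 0 = 0" "\<And>m. E (Suc m) = E m / x + of_int (dd m) * x^3"
  shows "x^m * E m = x^4 * (\<Sum>j<m. of_int (dd j) * x^j)"
proof (induction m)
  case 0 then show ?case using assms(2) by simp
next
  case (Suc m)
  have "x^Suc m * E (Suc m) = x^m * E m + of_int (dd m) * x^(m+4)"
    using assms(1) unfolding assms(3) by (simp add: field_simps power_add eval_nat_numeral)
  also have "\<dots> = x^4 * (\<Sum>j<Suc m. of_int (dd j) * x^j)"
    unfolding Suc by (simp add: algebra_simps power_add)
  finally show ?case .
qed

lemma geo_norm: fixes x :: "'a::{real_normed_field,banach}"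
  assumes "norm x < 1" "\<And>j. \<bar>b j\<bar> \<le> 1"
  shows "summable (\<lambda>j. of_real (b j) * x^j)" "norm (\<Sum>j. of_real (b j) * x^j) \<le> 1 / (1 - norm x)"
proof -
  have g: "summable (\<lambda>j. norm x ^ j)" using assms(1) by (simp add: summable_geometric)
  have le: "norm (of_real (b j) * x^j) \<le> norm x ^ j" for j
    using assms(2)[of j] by (simp add: norm_mult norm_power mult_left_le_one_le)
  have sn: "summable (\<lambda>j. norm (of_real (b j) * x^j))"
    by (rule summable_comparison_test'[OF g]) (use le in simp)
  then show "summable (\<lambda>j. of_real (b j) * x^j)" by (rule summable_norm_cancel)
  have "norm (\<Sum>j. of_real (b j) * x^j) \<le> (\<Sum>j. norm (of_real (b j) * x^j))" by (rule summable_norm[OF sn])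
  also have "\<dots> \<le> (\<Sum>j. norm x ^ j)" by (rule suminf_le[OF le sn g])
  also have "\<dots> = 1 / (1 - norm x)" using assms(1) by (simp add: suminf_geometric)
  finally show "norm (\<Sum>j. of_real (b j) * x^j) \<le> 1 / (1 - norm x)" .
qed

lemma K2: fixes x :: "'a::{real_normed_field,banach}"
  assumes "x \<noteq> 0" "norm x < 1" "E 0 = 0" "\<And>m. E (Suc m) = E m / x + of_int (dd m) * x^3"
    "\<And>j. \<bar>dd j\<bar> \<le> 1" "(\<lambda>j. of_int (dd j) * x^j) sums 0"
  shows "norm (E m) \<le> norm x ^ 4 / (1 - norm x)"
proof -
  let ?f = "\<lambda>j. of_int (dd j) * x^j :: 'a"
  have sp: "(\<lambda>i. ?f (i + m)) sums (0 - (\<Sum>i<m. ?f i))" by (rule sums_split_initial_segment[OF assms(6)])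
  have b: "\<bar>real_of_int (dd (j + m))\<bar> \<le> 1" for j using assms(5)[of "j+m"] by (metis of_int_1 of_int_abs of_int_le_iff)
  have "(\<lambda>i. of_real (real_of_int (dd (i+m))) * x^i) sums (\<Sum>i. of_real (real_of_int (dd (i+m))) * x^i)"
    using geo_norm(1)[OF assms(2) b] by (simp add: summable_sums)
  then have "(\<lambda>i. x^m * (of_real (real_of_int (dd (i+m))) * x^i)) sums (x^m * (\<Sum>i. of_real (real_of_int (dd (i+m))) * x^i))"
    by (rule sums_mult)
  moreover have "(\<lambda>i. x^m * (of_real (real_of_int (dd (i+m))) * x^i)) = (\<lambda>i. ?f (i + m))"
    by (auto simp: power_add algebra_simps)
  ultimately have "(\<lambda>i. ?f (i + m)) sums (x^m * (\<Sum>i. of_real (real_of_int (dd (i+m))) * x^i))" by simp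
  with sp have eq: "(\<Sum>i<m. ?f i) = - (x^m * (\<Sum>i. of_real (real_of_int (dd (i+m))) * x^i))"
    using sums_unique2 by fastforce
  have "x^m * E m = x^m * (- (x^4) * (\<Sum>i. of_real (real_of_int (dd (i+m))) * x^i))"
    unfolding K1[of x E dd, OF assms(1,3,4)] eq by (simp add: algebra_simps)
  then have "E m = - (x^4) * (\<Sum>i. of_real (real_of_int (dd (i+m))) * x^i)" using assms(1) by (metis mult_left_cancel power_not_zero)
  then have "norm (E m) = norm x ^ 4 * norm (\<Sum>i. of_real (real_of_int (dd (i+m))) * x^i)"
    by (simp add: norm_mult norm_power)
  also have "\<dots> \<le> norm x ^ 4 * (1 / (1 - norm x))"
    by (rule mult_left_mono[OF geo_norm(2)[OF assms(2) b]]) simp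
  finally show ?thesis by simp
qed

lemma K3: fixes x :: "'a::{real_normed_field,banach}"
  assumes "x \<noteq> 0" "norm x < 1" "E 0 = 0" "\<And>m. E (Suc m) = E m / x + of_int (dd m) * x^3"
    "\<And>m. norm (E m) \<le> M"
  shows "(\<lambda>j. of_int (dd j) * x^j) sums 0"
  unfolding sums_def
proof (rule Lim_null_comparison)
  let ?P = "\<lambda>m. (\<Sum>j<m. of_int (dd j) * x^j :: 'a)"
  have "norm (?P m) \<le> M / norm x ^ 4 * norm x ^ m" for m
  proof -
    have "norm x ^ 4 * norm (?P m) = norm x ^ m * norm (E m)"
      using arg_cong[OF K1[of x E dd, OF assms(1,3,4)], of norm, of m] by (simp add: norm_mult norm_power)
    also have "\<dots> \<le> norm x ^ m * M" by (rule mult_left_mono[OF assms(5)]) simp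
    finally have "norm x ^ 4 * norm (?P m) \<le> norm x ^ m * M" .
    moreover have "0 < norm x ^ 4" using assms(1) by simp
    ultimately show ?thesis by (simp add: field_simps)
  qed
  then show "\<forall>\<^sub>F m in sequentially. norm (?P m) \<le> M / norm x ^ 4 * norm x ^ m" by simp
  show "(\<lambda>m. M / norm x ^ 4 * norm x ^ m) \<longlonglongrightarrow> 0"
    by (rule tendsto_mult_right_zero) (rule LIMSEQ_power_zero, use assms(2) in simp)
qed

lemma sums_pair: fixes f :: "nat \<Rightarrow> 'a::real_normed_vector \<times> 'b::real_normed_vector"
  assumes "(\<lambda>n. fst (f n)) sums a" "(\<lambda>n. snd (f n)) sums b" shows "f sums (a, b)"
proof -
  have "(\<lambda>n. (\<Sum>i<n. fst (f i), \<Sum>i<n. snd (f i))) \<longlonglongrightarrow> (a, b)"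
    using assms unfolding sums_def by (rule tendsto_Pair)
  moreover have "(\<lambda>n. (\<Sum>i<n. fst (f i), \<Sum>i<n. snd (f i))) = (\<lambda>n. \<Sum>i<n. f i)"
    by (auto simp: prod_eq_iff fst_sum snd_sum)
  ultimately show ?thesis unfolding sums_def by simp
qed

lemma powi_shift: fixes x :: "'a::field" assumes "x \<noteq> 0" shows "x powi (l + int n) = x powi l * x^n"
  using assms by (simp add: power_int_add)

lemma aval_rep: assumes "\<forall>i\<ge>l. eps i \<in> {0,1}"
  shows "aval l eps = (beta2 powi l * (\<Sum>n. of_real (real (eps (l + int n))) * beta2^n),
                       beta3 powi l * (\<Sum>n. of_real (real (eps (l + int n))) * beta3^n))"
proof -
  have b: "\<bar>real (eps (l + int n))\<bar> \<le> 1" for n using assms[rule_format, of "l + int n"] by auto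
  have s2: "(\<lambda>n. of_real (real (eps (l + int n))) * beta2^n) sums (\<Sum>n. of_real (real (eps (l + int n))) * beta2^n)"
    using geo_norm(1)[of beta2 "\<lambda>n. real (eps (l + int n))"] b beta2_abs_lt1 by (simp add: summable_sums)
  have s3: "(\<lambda>n. of_real (real (eps (l + int n))) * beta3^n) sums (\<Sum>n. of_real (real (eps (l + int n))) * beta3^n)"
    using geo_norm(1)[of beta3 "\<lambda>n. real (eps (l + int n))"] b beta3_abs_lt1 by (simp add: summable_sums)
  let ?f = "\<lambda>n. real (eps (l + int n)) *\<^sub>R apow (l + int n)"
  have "(\<lambda>n. fst (?f n)) sums (beta2 powi l * (\<Sum>n. of_real (real (eps (l + int n))) * beta2^n))"
  proof -
    have "(\<lambda>n. fst (?f n)) = (\<lambda>n. beta2 powi l * (of_real (real (eps (l + int n))) * beta2^n))"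
      by (auto simp: apow_def powi_shift[OF beta2_nz])
    then show ?thesis using sums_mult[OF s2] by simp
  qed
  moreover have "(\<lambda>n. snd (?f n)) sums (beta3 powi l * (\<Sum>n. of_real (real (eps (l + int n))) * beta3^n))"
  proof -
    have "(\<lambda>n. snd (?f n)) = (\<lambda>n. beta3 powi l * (of_real (real (eps (l + int n))) * beta3^n))"
      by (auto simp: apow_def powi_shift[OF beta3_nz] scaleR_conv_of_real)
    then show ?thesis using sums_mult[OF s3] by simp
  qed
  ultimately have "?f sums (beta2 powi l * (\<Sum>n. of_real (real (eps (l + int n))) * beta2^n),
                       beta3 powi l * (\<Sum>n. of_real (real (eps (l + int n))) * beta3^n))"
    by (rule sums_pair)
  then show ?thesis unfolding aval_def by (rule sums_unique[symmetric])
qed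

definition rpoly :: "real \<Rightarrow> real \<Rightarrow> real \<Rightarrow> real \<Rightarrow> 'a::real_normed_algebra_1 \<Rightarrow> 'a" where
  "rpoly c0 c1 c2 c3 x = of_real c0 + of_real c1 * x + of_real c2 * x^2 + of_real c3 * x^3"

lemma nb4: fixes x :: "'a::real_normed_algebra_1" assumes "norm x \<le> 1"
  shows "norm (rpoly c0 c1 c2 c3 x) \<le> \<bar>c0\<bar> + \<bar>c1\<bar> + \<bar>c2\<bar> + \<bar>c3\<bar>"
proof -
  have t: "norm (of_real c * x^k) \<le> \<bar>c\<bar>" for c k
  proof -
    have a: "norm (of_real c * x^k) \<le> \<bar>c\<bar> * norm (x^k)" using norm_mult_ineq[of "of_real c :: 'a" "x^k"] by simp
    have "norm (x^k) \<le> norm x ^ k" by (rule norm_power_ineq)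
    also have "norm x ^ k \<le> 1" using assms by (simp add: power_le_one)
    finally have "\<bar>c\<bar> * norm (x^k) \<le> \<bar>c\<bar>" by (simp add: mult_left_le)
    with a show ?thesis by linarith
  qed
  have "norm (rpoly c0 c1 c2 c3 x) \<le> norm (of_real c0 :: 'a) + norm (of_real c1 * x) + norm (of_real c2 * x^2) + norm (of_real c3 * x^3)"
    unfolding rpoly_def by (intro order.trans[OF norm_triangle_ineq] add_right_mono) auto
  also have "\<dots> \<le> \<bar>c0\<bar> + \<bar>c1\<bar> + \<bar>c2\<bar> + \<bar>c3\<bar>" using t[of c1 1] t[of c2 2] t[of c3 3] by simp
  finally show ?thesis .
qed

lemma evq_rpoly: "evq (c0,c1,c2,c3) x = rpoly (of_int c0) (of_int c1) (of_int c2) (of_int c3) (x::'a::{real_normed_algebra_1,comm_ring_1})"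
  unfolding evq_def rpoly_def by simp

lemma states_form: assumes "s \<in> states"
  shows "\<exists>t c0 c1 c2 c3. \<bar>t\<bar> = 1 \<and> \<bar>c0\<bar> + \<bar>c1\<bar> + \<bar>c2\<bar> + \<bar>c3\<bar> \<le> 4 \<and>
     fst s = t * rpoly c0 c1 c2 c3 beta2 \<and> snd s = of_real t * rpoly c0 c1 c2 c3 beta3"
  using assms unfolding states_def
proof (elim UnE CollectE exE conjE)
  fix t cf assume s: "s = t *\<^sub>R (\<Sum>i<4. cf i *\<^sub>R apow (int i))" and t: "t \<in> {-1,1}" and c: "\<forall>i<4. cf i \<in> {0,1}"
  have ab: "\<bar>cf i\<bar> \<le> 1" if "i < 4" for i using c that by auto
  have "\<bar>cf 0\<bar> \<le> 1" "\<bar>cf 1\<bar> \<le> 1" "\<bar>cf 2\<bar> \<le> 1" "\<bar>cf 3\<bar> \<le> 1" by (rule ab, simp)+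
  then have "\<bar>cf 0\<bar> + \<bar>cf 1\<bar> + \<bar>cf 2\<bar> + \<bar>cf 3\<bar> \<le> 4" by linarith
  moreover have "fst s = t * rpoly (cf 0) (cf 1) (cf 2) (cf 3) beta2" "snd s = of_real t * rpoly (cf 0) (cf 1) (cf 2) (cf 3) beta3"
    unfolding s sum4 by (simp_all add: rpoly_def apow_def scaleR_conv_of_real of_real_eq_id)
  moreover have "\<bar>t\<bar> = 1" using t by auto
  ultimately show ?thesis by blast
next
  fix t x assume s: "s = t *\<^sub>R x" and t: "t \<in> {-1,1}"
    and x: "x \<in> {apow (-1) + apow 0 + apow 2, apow (-2) + apow (-1) + apow 1, apow (-3) + apow (-2) + apow 0 + apow 3}"
  have "\<exists>c0 c1 c2 c3 :: int. x = emb (c0,c1,c2,c3) \<and> \<bar>c0\<bar> + \<bar>c1\<bar> + \<bar>c2\<bar> + \<bar>c3\<bar> \<le> 4"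
  proof -
    from x consider "x = apow (-1) + apow 0 + apow 2" | "x = apow (-2) + apow (-1) + apow 1"
      | "x = apow (-3) + apow (-2) + apow 0 + apow 3" by blast
    then show ?thesis
    proof cases
      case 1 then show ?thesis using emb_X1 by (intro exI[of _ 0] exI[of _ "-1"] exI[of _ 0] exI[of _ 1]) simp
    next
      case 2 then show ?thesis using emb_X2 by (intro exI[of _ "-1"] exI[of _ 0] exI[of _ 1] exI[of _ 0]) simp
    next
      case 3 then show ?thesis using emb_X3 by (intro exI[of _ 1] exI[of _ 2] exI[of _ 1] exI[of _ 0]) simp
    qed
  qed
  then obtain c0 c1 c2 c3 :: int where xc: "x = emb (c0,c1,c2,c3)" and cs: "\<bar>c0\<bar> + \<bar>c1\<bar> + \<bar>c2\<bar> + \<bar>c3\<bar> \<le> 4" by blast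
  have "\<bar>real_of_int c0\<bar> + \<bar>real_of_int c1\<bar> + \<bar>real_of_int c2\<bar> + \<bar>real_of_int c3\<bar> \<le> 4"
  proof -
    have "real_of_int (\<bar>c0\<bar> + \<bar>c1\<bar> + \<bar>c2\<bar> + \<bar>c3\<bar>) \<le> 4" using cs by linarith
    then show ?thesis by simp
  qed
  moreover have "fst s = t * rpoly (of_int c0) (of_int c1) (of_int c2) (of_int c3) beta2"
    "snd s = of_real t * rpoly (of_int c0) (of_int c1) (of_int c2) (of_int c3) beta3"
    unfolding s xc emb_def evq_rpoly by (simp_all add: scaleR_conv_of_real of_real_eq_id)
  moreover have "\<bar>t\<bar> = 1" using t by auto
  ultimately show ?thesis by blast
qed

lemma states_bound: assumes "s \<in> states" shows "norm (fst s) \<le> 4" "norm (snd s) \<le> 4"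
proof -
  obtain t c0 c1 c2 c3 where h: "\<bar>t\<bar> = 1" "\<bar>c0\<bar> + \<bar>c1\<bar> + \<bar>c2\<bar> + \<bar>c3\<bar> \<le> 4"
     "fst s = t * rpoly c0 c1 c2 c3 beta2" "snd s = of_real t * rpoly c0 c1 c2 c3 beta3"
    using states_form[OF assms] by blast
  have "norm (rpoly c0 c1 c2 c3 beta2) \<le> 4" using nb4[of beta2 c0 c1 c2 c3] beta2_abs_lt1 h(2) by simp
  then show "norm (fst s) \<le> 4" using h(1,3) by (simp add: abs_mult)
  have "norm (rpoly c0 c1 c2 c3 beta3) \<le> 4" using nb4[of beta3 c0 c1 c2 c3] beta3_abs_lt1 h(2) by simp
  then show "norm (snd s) \<le> 4" using h(1,4) by (simp add: norm_mult)
qed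

lemma check_facts:
  assumes "s \<in> set Slist" "d \<in> {-1,0,1}"
  shows "Tq s d \<in> set Slist \<or> Tq s d = (1,1,1,1) \<or> Tq s d = (-1,-1,-1,-1) \<or> \<not> good 8 (Tq s d)"
  using check_ok assms unfolding check_def list_all_iff by auto

lemma check2_facts:
  assumes "s \<in> set Slist" "d \<in> {-1,0,1}"
  shows "(Tq s d = (1,1,1,1) \<longrightarrow> s = (0,1,1,1) \<and> d = 1) \<and>
      (Tq s d = (0,1,1,1) \<longrightarrow> s = (0,0,1,1) \<and> d = 1) \<and>
      (Tq s d = (0,0,1,1) \<longrightarrow> s = (0,0,0,1) \<and> d = 1) \<and>
      (Tq s d = (0,0,0,1) \<longrightarrow> s = (0,0,0,0) \<and> d = 1) \<and>
      (Tq s d = (-1,-1,-1,-1) \<longrightarrow> s = (0,-1,-1,-1) \<and> d = -1) \<and>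
      (Tq s d = (0,-1,-1,-1) \<longrightarrow> s = (0,0,-1,-1) \<and> d = -1) \<and>
      (Tq s d = (0,0,-1,-1) \<longrightarrow> s = (0,0,0,-1) \<and> d = -1) \<and>
      (Tq s d = (0,0,0,-1) \<longrightarrow> s = (0,0,0,0) \<and> d = -1)"
  using check2_ok assms unfolding check2_def list_all_iff by auto

lemma ser_diff: fixes x :: "'a::{real_normed_field,banach}"
  assumes "norm x < 1" "\<And>n. \<bar>a n\<bar> \<le> 1" "\<And>n. \<bar>b n\<bar> \<le> 1"
  shows "(\<Sum>n. of_real (a n) * x^n) = (\<Sum>n. of_real (b n) * x^n) \<longleftrightarrow> (\<lambda>n. of_real (a n - b n) * x^n) sums 0"
proof -
  have sa: "(\<lambda>n. of_real (a n) * x^n) sums (\<Sum>n. of_real (a n) * x^n)"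
    using geo_norm(1)[OF assms(1,2)] by (simp add: summable_sums)
  have sb: "(\<lambda>n. of_real (b n) * x^n) sums (\<Sum>n. of_real (b n) * x^n)"
    using geo_norm(1)[OF assms(1,3)] by (simp add: summable_sums)
  have "(\<lambda>n. of_real (a n) * x^n - of_real (b n) * x^n) sums ((\<Sum>n. of_real (a n) * x^n) - (\<Sum>n. of_real (b n) * x^n))"
    by (rule sums_diff[OF sa sb])
  moreover have "(\<lambda>n. of_real (a n) * x^n - of_real (b n) * x^n) = (\<lambda>n. of_real (a n - b n) * x^n)"
    by (simp add: algebra_simps)
  ultimately have d: "(\<lambda>n. of_real (a n - b n) * x^n) sums ((\<Sum>n. of_real (a n) * x^n) - (\<Sum>n. of_real (b n) * x^n))"
    by simp
  show ?thesis
  proof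
    assume "(\<Sum>n. of_real (a n) * x^n) = (\<Sum>n. of_real (b n) * x^n)"
    then show "(\<lambda>n. of_real (a n - b n) * x^n) sums 0" using d by simp
  next
    assume "(\<lambda>n. of_real (a n - b n) * x^n) sums 0"
    then show "(\<Sum>n. of_real (a n) * x^n) = (\<Sum>n. of_real (b n) * x^n)" using d sums_unique2 by fastforce
  qed
qed

lemma good_path:
  assumes "\<And>m. inR (C m)" "\<And>m. C (Suc m) = Tq (C m) (dd m)" "\<And>m. dd m \<in> {-1,0,1}"
  shows "good k (C m)"
proof (induction k arbitrary: m)
  case 0 then show ?case using assms(1) by simp
next
  case (Suc k)
  have "good k (Tq (C m) (dd m))" using Suc[of "Suc m"] assms(2) by simp
  then show ?case using assms(1)[of m] assms(3)[of m] by auto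
qed

theorem corollary3p4:
  fixes l :: int and eps eps' :: "int \<Rightarrow> nat"
  assumes "in_Dinf l eps" and "in_Dinf l eps'"
  shows "aval l eps = aval l eps' \<longleftrightarrow> is_path_from_init l eps eps'"
proof -
  have e01: "\<forall>i\<ge>l. eps i \<in> {0,1}" "\<forall>i\<ge>l. eps' i \<in> {0,1}" using assms unfolding in_Dinf_def by auto
  define A where "A n = real (eps (l + int n))" for n
  define A' where "A' n = real (eps' (l + int n))" for n
  define dd where "dd n = int (eps (l + int n)) - int (eps' (l + int n))" for n
  have ab: "\<bar>A n\<bar> \<le> 1" "\<bar>A' n\<bar> \<le> 1" for n
    using e01(1)[rule_format, of "l + int n"] e01(2)[rule_format, of "l + int n"] unfolding A_def A'_def by auto
  have ddc: "dd n \<in> {-1,0,1}" for n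
    using e01(1)[rule_format, of "l + int n"] e01(2)[rule_format, of "l + int n"] unfolding dd_def by auto
  have ddb: "\<bar>dd n\<bar> \<le> 1" for n using ddc[of n] by auto
  have ddr: "A n - A' n = real_of_int (dd n)" for n unfolding A_def A'_def dd_def by simp
  have ofd: "(of_real (A n - A' n) :: 'a::real_normed_algebra_1) = of_int (dd n)" for n
    unfolding ddr by simp
  have rep: "aval l eps = (beta2 powi l * (\<Sum>n. of_real (A n) * beta2^n), beta3 powi l * (\<Sum>n. of_real (A n) * beta3^n))"
    "aval l eps' = (beta2 powi l * (\<Sum>n. of_real (A' n) * beta2^n), beta3 powi l * (\<Sum>n. of_real (A' n) * beta3^n))"
    unfolding A_def A'_def by (rule aval_rep[OF e01(1)], rule aval_rep[OF e01(2)])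
  have key: "aval l eps = aval l eps' \<longleftrightarrow>
      ((\<lambda>n. of_int (dd n) * beta2^n) sums 0 \<and> (\<lambda>n. of_int (dd n) * beta3^n) sums 0)"
  proof -
    have "aval l eps = aval l eps' \<longleftrightarrow>
       (\<Sum>n. of_real (A n) * beta2^n) = (\<Sum>n. of_real (A' n) * beta2^n) \<and>
       (\<Sum>n. of_real (A n) * beta3^n) = (\<Sum>n. of_real (A' n) * beta3^n)"
      unfolding rep using beta2_nz beta3_nz by simp
    also have "\<dots> \<longleftrightarrow> ((\<lambda>n. of_real (A n - A' n) * beta2^n) sums 0 \<and> (\<lambda>n. of_real (A n - A' n) * beta3^n) sums 0)"
      using ser_diff[of beta2 A A'] ser_diff[of beta3 A A'] beta2_abs_lt1 beta3_abs_lt1 ab by simp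
    finally show ?thesis unfolding ofd .
  qed
  show ?thesis
  proof
    assume "aval l eps = aval l eps'"
    then have z2: "(\<lambda>n. of_int (dd n) * beta2^n) sums 0" and z3: "(\<lambda>n. of_int (dd n) * beta3^n) sums 0"
      using key by auto
    define C where "C = rec_nat (0,0,0,0) (\<lambda>m c. Tq c (dd m))"
    have C0: "C 0 = (0,0,0,0)" and CS: "C (Suc m) = Tq (C m) (dd m)" for m by (simp_all add: C_def)
    have ev0: "evq (0,0,0,0) x = 0" for x :: "'a::comm_ring_1" by (simp add: evq_def)
    have b2: "norm (evq (C m) beta2) \<le> norm beta2 ^ 4 / (1 - norm beta2)" for m
      by (rule K2[of beta2 "\<lambda>m. evq (C m) beta2" dd])
         (use beta2_nz beta2_abs_lt1 z2 ddb in \<open>simp_all add: C0 ev0 CS evq_T[OF beta2_nz beta2_props(1)]\<close>)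
    have b3: "norm (evq (C m) beta3) \<le> norm beta3 ^ 4 / (1 - norm beta3)" for m
      by (rule K2[of beta3 "\<lambda>m. evq (C m) beta3" dd])
         (use beta3_nz beta3_abs_lt1 z3 ddb in \<open>simp_all add: C0 ev0 CS evq_T[OF beta3_nz PP_beta3]\<close>)
    have inr: "inR (C m)" for m
    proof -
      obtain c0 c1 c2 c3 where c: "C m = (c0,c1,c2,c3)" by (cases "C m") auto
      show ?thesis unfolding c by (rule inR_sound) (use b2[of m] b3[of m] c in simp_all)
    qed
    have gd: "good k (C m)" for k m by (rule good_path[of C dd]) (use inr CS ddc in auto)
    have d1: "eps (l + int n) = 1" if "dd n = 1" for n
      using that e01(1)[rule_format, of "l + int n"] e01(2)[rule_format, of "l + int n"] unfolding dd_def by auto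
    have d1': "eps' (l + int n) = 1" if "dd n = -1" for n
      using that e01(1)[rule_format, of "l + int n"] e01(2)[rule_format, of "l + int n"] unfolding dd_def by auto
    have no4: False if "eps (l + int k) = 1" "eps (l + int k + 1) = 1" "eps (l + int k + 2) = 1" "eps (l + int k + 3) = 1" for k
      using assms(1) that unfolding in_Dinf_def by (metis le_add_same_cancel1 of_nat_0_le_iff)
    have no4': False if "eps' (l + int k) = 1" "eps' (l + int k + 1) = 1" "eps' (l + int k + 2) = 1" "eps' (l + int k + 3) = 1" for k
      using assms(2) that unfolding in_Dinf_def by (metis le_add_same_cancel1 of_nat_0_le_iff)
    have inS: "C m \<in> set Slist" for m
    proof (induction m rule: less_induct)
      case (less m)
      show ?case
      proof (cases m)
        case 0 then show ?thesis by (simp add: C0 Slist_def)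
      next
        case (Suc k)
        have Ck: "C k \<in> set Slist" using less Suc by simp
        have cf: "Tq (C k) (dd k) \<in> set Slist \<or> Tq (C k) (dd k) = (1,1,1,1) \<or> Tq (C k) (dd k) = (-1,-1,-1,-1) \<or> \<not> good 8 (Tq (C k) (dd k))"
          by (rule check_facts[OF Ck ddc])
        have bk: "C j = (0,0,0,0) \<or> (\<exists>i. j = Suc i \<and> C (Suc i) = Tq (C i) (dd i) \<and> C i \<in> set Slist)" if "j \<le> k" for j
        proof (cases j)
          case 0 then show ?thesis by (simp add: C0)
        next
          case (Suc i) then show ?thesis using less that \<open>m = Suc k\<close> CS by simp
        qed
        show ?thesis
        proof -
          { assume h: "Tq (C k) (dd k) = (1,1,1,1)"
            then have k1: "C k = (0,1,1,1)" "dd k = 1" using check2_facts[OF Ck ddc] by auto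
            obtain k2 where k2: "k = Suc k2" "C k2 \<in> set Slist" using bk[of k] k1 by auto
            then have "C k2 = (0,0,1,1)" "dd k2 = 1" using check2_facts[OF k2(2) ddc, of k2] k1 CS by auto
            moreover obtain k3 where k3: "k2 = Suc k3" "C k3 \<in> set Slist" using bk[of k2] k2 calculation by auto
            ultimately have "C k3 = (0,0,0,1)" "dd k3 = 1" using check2_facts[OF k3(2) ddc, of k3] CS by auto
            moreover obtain k4 where k4: "k3 = Suc k4" "C k4 \<in> set Slist" using bk[of k3] k2 k3 calculation by auto
            ultimately have "dd k4 = 1" using check2_facts[OF k4(2) ddc, of k4] CS by auto
            then have False using no4[of k4] d1[of k4] d1[of k3] d1[of k2] d1[of k] k1 k2 k3 k4 \<open>dd k2 = 1\<close> \<open>dd k3 = 1\<close>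
              by (simp add: ac_simps)
          }
          moreover
          { assume h: "Tq (C k) (dd k) = (-1,-1,-1,-1)"
            then have k1: "C k = (0,-1,-1,-1)" "dd k = -1" using check2_facts[OF Ck ddc] by auto
            obtain k2 where k2: "k = Suc k2" "C k2 \<in> set Slist" using bk[of k] k1 by auto
            then have "C k2 = (0,0,-1,-1)" "dd k2 = -1" using check2_facts[OF k2(2) ddc, of k2] k1 CS by auto
            moreover obtain k3 where k3: "k2 = Suc k3" "C k3 \<in> set Slist" using bk[of k2] k2 calculation by auto
            ultimately have "C k3 = (0,0,0,-1)" "dd k3 = -1" using check2_facts[OF k3(2) ddc, of k3] CS by auto
            moreover obtain k4 where k4: "k3 = Suc k4" "C k4 \<in> set Slist" using bk[of k3] k2 k3 calculation by auto
            ultimately have "dd k4 = -1" using check2_facts[OF k4(2) ddc, of k4] CS by auto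
            then have False using no4'[of k4] d1'[of k4] d1'[of k3] d1'[of k2] d1'[of k] k1 k2 k3 k4 \<open>dd k2 = -1\<close> \<open>dd k3 = -1\<close>
              by (simp add: ac_simps)
          }
          moreover have "good 8 (Tq (C k) (dd k))" using gd[of 8 "Suc k"] CS by simp
          ultimately show ?thesis using cf Suc CS by auto
        qed
      qed
    qed
    define e where "e n = emb (C (nat (n - l)))" for n
    show "is_path_from_init l eps eps'"
      unfolding is_path_from_init_def
    proof (intro exI conjI allI impI)
      show "e l = 0" unfolding e_def by (simp add: C0 emb_0)
      fix n assume n: "l \<le> n"
      obtain m where m: "n = l + int m" using n by (metis le_add_diff_inverse add.commute zle_iff_zadd)
      have en: "e n = emb (C m)" unfolding e_def m by simp
      have en1: "e (n+1) = emb (C (Suc m))" unfolding e_def m by (simp add: nat_add_distrib)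
      show "e n \<in> states" unfolding en by (rule Slist_states[OF inS])
      show "is_edge (e n) (eps n, eps' n) (e (n + 1))"
        unfolding is_edge_def
      proof (intro conjI)
        show "e n \<in> states" unfolding en by (rule Slist_states[OF inS])
        show "e (n+1) \<in> states" unfolding en1 by (rule Slist_states[OF inS])
        show "fst (eps n, eps' n) \<in> {0,1}" "snd (eps n, eps' n) \<in> {0,1}" using e01 n by auto
        have "real_of_int (dd m) = real (eps n) - real (eps' n)" unfolding dd_def m by simp
        then show "e (n + 1) = div_alpha (e n) + (real (fst (eps n, eps' n)) - real (snd (eps n, eps' n))) *\<^sub>R apow 3"
          unfolding en en1 CS emb_T by simp
      qed
    qed
  next
    assume "is_path_from_init l eps eps'"
    then obtain e where e0: "e l = 0" and ee: "\<And>n. l \<le> n \<Longrightarrow> e n \<in> states \<and> is_edge (e n) (eps n, eps' n) (e (n+1))"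
      unfolding is_path_from_init_def by blast
    have rec: "e (l + int (Suc m)) = div_alpha (e (l + int m)) + real_of_int (dd m) *\<^sub>R apow 3" for m
    proof -
      have "is_edge (e (l + int m)) (eps (l + int m), eps' (l + int m)) (e (l + int m + 1))" using ee[of "l + int m"] by simp
      then have "e (l + int m + 1) = div_alpha (e (l + int m)) + (real (eps (l + int m)) - real (eps' (l + int m))) *\<^sub>R apow 3"
        unfolding is_edge_def by simp
      moreover have "real (eps (l + int m)) - real (eps' (l + int m)) = real_of_int (dd m)" unfolding dd_def by simp
      ultimately show ?thesis by (simp add: ac_simps)
    qed
    have st: "e (l + int m) \<in> states" for m using ee[of "l + int m"] by simp
    have r2: "fst (e (l + int (Suc m))) = fst (e (l + int m)) / beta2 + of_int (dd m) * beta2^3" for m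
      unfolding rec by (simp add: div_alpha_def apow_def)
    have r3: "snd (e (l + int (Suc m))) = snd (e (l + int m)) / beta3 + of_int (dd m) * beta3^3" for m
      unfolding rec by (simp add: div_alpha_def apow_def scaleR_conv_of_real)
    have z2: "(\<lambda>n. of_int (dd n) * beta2^n) sums 0"
      by (rule K3[of beta2 "\<lambda>m. fst (e (l + int m))" dd 4, OF beta2_nz _ _ r2])
         (use beta2_abs_lt1 e0 states_bound(1)[OF st] in simp_all)
    have z3: "(\<lambda>n. of_int (dd n) * beta3^n) sums 0"
      by (rule K3[of beta3 "\<lambda>m. snd (e (l + int m))" dd 4, OF beta3_nz _ _ r3])
         (use beta3_abs_lt1 e0 states_bound(2)[OF st] in simp_all)
    show "aval l eps = aval l eps'" using key z2 z3 by simp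
  qed
qed

end
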